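(* Let $G$ be a connected multi-ended graph on $X$ and let $C$ be a cut. Let $a$ and $b$ be the numbers of finite and infinite connected components of the induced subgraph $G|_C$, respectively. Then $a+b\le|\delta C|$, and in fact $$a<|\delta C|\quad\text{and}\quad 1\le b\le\frac{|\delta C|-a}{k_0}.$$ In particular, every thin cut is connected, and hence every thin cut is neat.
   Context: A graph on $X$ is an irreflexive symmetric relation $G\subseteq X^2$. For $A\subseteq X$, $\delta A$ is the set of edges with one endpoint in $A$ and the other in $X\setminus A$. A cut is a set $A\subseteq X$ with $A$ and $X\setminus A$ infinite and $\delta A$ finite; $G$ is multi-ended if it has a cut. $k_0:=\min\{|\delta A|: A$ a cut$\}$, and a cut $A$ is thin if $|\delta A|=k_0$. A set $A$ is connected if the induced subgraph $G|_A$ is connected; a cut $A$ is neat if both $A$ and $X\setminus A$ are connected. *)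

theory Defs
  imports Complex_Main
begin

definition is_graph :: "'a set \<Rightarrow> ('a \<times> 'a) set \<Rightarrow> bool" where
  "is_graph X G \<longleftrightarrow> G \<subseteq> X \<times> X \<and> irrefl G \<and> sym G"

text \<open>Edge boundary: each unordered edge {x,y} with x in A, y in X - A is counted once,
  as the ordered pair (x,y).\<close>
definition boundary :: "'a set \<Rightarrow> ('a \<times> 'a) set \<Rightarrow> 'a set \<Rightarrow> ('a \<times> 'a) set" where
  "boundary X G A = {(x, y) \<in> G. x \<in> A \<and> y \<in> X - A}"

definition is_cut :: "'a set \<Rightarrow> ('a \<times> 'a) set \<Rightarrow> 'a set \<Rightarrow> bool" where
  "is_cut X G A \<longleftrightarrow> A \<subseteq> X \<and> infinite A \<and> infinite (X - A) \<and> finite (boundary X G A)"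

definition multi_ended :: "'a set \<Rightarrow> ('a \<times> 'a) set \<Rightarrow> bool" where
  "multi_ended X G \<longleftrightarrow> (\<exists>A. is_cut X G A)"

definition k0 :: "'a set \<Rightarrow> ('a \<times> 'a) set \<Rightarrow> nat" where
  "k0 X G = (LEAST n. \<exists>A. is_cut X G A \<and> card (boundary X G A) = n)"

definition thin_cut :: "'a set \<Rightarrow> ('a \<times> 'a) set \<Rightarrow> 'a set \<Rightarrow> bool" where
  "thin_cut X G A \<longleftrightarrow> is_cut X G A \<and> card (boundary X G A) = k0 X G"

definition induced :: "('a \<times> 'a) set \<Rightarrow> 'a set \<Rightarrow> ('a \<times> 'a) set" where
  "induced G A = G \<inter> (A \<times> A)"

definition connected_set :: "('a \<times> 'a) set \<Rightarrow> 'a set \<Rightarrow> bool" where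
  "connected_set G A \<longleftrightarrow> (\<forall>x\<in>A. \<forall>y\<in>A. (x, y) \<in> (induced G A)\<^sup>*)"

definition neat_cut :: "'a set \<Rightarrow> ('a \<times> 'a) set \<Rightarrow> 'a set \<Rightarrow> bool" where
  "neat_cut X G A \<longleftrightarrow> is_cut X G A \<and> connected_set G A \<and> connected_set G (X - A)"

definition components :: "('a \<times> 'a) set \<Rightarrow> 'a set \<Rightarrow> 'a set set" where
  "components G A = (\<lambda>x. {y \<in> A. (x, y) \<in> (induced G A)\<^sup>*}) ` A"

end

theory Submission
  imports Defs
begin

lemma cross_edge:
  assumes "(x, w) \<in> (induced G X)\<^sup>*" "x \<in> S" "w \<notin> S"
  shows "\<exists>u v. (u, v) \<in> induced G X \<and> u \<in> S \<and> v \<notin> S"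
proof -
  have "w \<in> S \<or> (\<exists>u v. (u, v) \<in> induced G X \<and> u \<in> S \<and> v \<notin> S)"
    using assms(1)
  proof (induction rule: rtrancl_induct)
    case base then show ?case using assms(2) by simp
  next
    case (step y z) then show ?case by blast
  qed
  then show ?thesis using assms(3) by blast
qed

lemma k0_pos:
  assumes g: "is_graph X G" and c: "connected_set G X" and cut: "is_cut X G C"
  shows "1 \<le> k0 X G"
proof -
  have "\<exists>A. is_cut X G A \<and> card (boundary X G A) = k0 X G"
    unfolding k0_def by (rule LeastI[of _ "card (boundary X G C)"]) (use cut in blast)
  then obtain A where A: "is_cut X G A" "card (boundary X G A) = k0 X G" by blast
  have "boundary X G A \<noteq> {}"
  proof -
    from A(1) have "A \<noteq> {}" "X - A \<noteq> {}" unfolding is_cut_def by auto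
    then obtain x w where xw: "x \<in> A" "w \<in> X - A" by blast
    with A(1) have "x \<in> X" unfolding is_cut_def by auto
    with xw c have "(x, w) \<in> (induced G X)\<^sup>*" unfolding connected_set_def by auto
    from cross_edge[OF this xw(1)] xw obtain u v where "(u, v) \<in> induced G X" "u \<in> A" "v \<notin> A"
      by blast
    then show ?thesis unfolding boundary_def induced_def by blast
  qed
  with A(1) have "card (boundary X G A) \<noteq> 0" unfolding is_cut_def by simp
  with A(2) show ?thesis by simp
qed

lemma main_count:
  assumes g: "is_graph X G" and c: "connected_set G X" and cut: "is_cut X G C"
  shows "finite (components G C)
    \<and> card {K \<in> components G C. finite K} + card {K \<in> components G C. infinite K} * k0 X G
        \<le> card (boundary X G C)
    \<and> 1 \<le> card {K \<in> components G C. infinite K}"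
proof -
  define R where "R = (induced G C)\<^sup>*"
  define comp where "comp x = {y \<in> C. (x, y) \<in> R}" for x
  have comps: "components G C = comp ` C"
    unfolding components_def comp_def R_def by simp
  have CX: "C \<subseteq> X" and Cinf: "infinite C" and XCinf: "infinite (X - C)"
    and bfin: "finite (boundary X G C)"
    using cut unfolding is_cut_def by auto
  have symG: "sym G" and GX: "G \<subseteq> X \<times> X" using g unfolding is_graph_def by auto
  have "sym (induced G C)" using symG unfolding induced_def sym_def by blast
  then have symR: "sym R" unfolding R_def by (rule sym_rtrancl)
  have transR: "trans R" unfolding R_def by (rule trans_rtrancl)
  have self: "x \<in> comp x" if "x \<in> C" for x using that unfolding comp_def R_def by simp
  have compeq: "comp y = comp x" if "y \<in> comp x" for x y
  proof -
    from that have xy: "(x, y) \<in> R" unfolding comp_def by simp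
    then have yx: "(y, x) \<in> R" using symR unfolding sym_def by blast
    show ?thesis unfolding comp_def using xy yx transR unfolding trans_def by blast
  qed
  have closed: "v \<in> comp x" if "u \<in> comp x" "(u, v) \<in> G" "v \<in> C" for x u v
  proof -
    from that have "(x, u) \<in> R" "u \<in> C" unfolding comp_def by auto
    moreover have "(u, v) \<in> induced G C" using that \<open>u \<in> C\<close> unfolding induced_def by auto
    ultimately have "(x, v) \<in> R" unfolding R_def by (meson rtrancl_into_rtrancl)
    with that show ?thesis unfolding comp_def by simp
  qed
  have compC: "comp x \<subseteq> C" for x unfolding comp_def by auto
  define B where "B K = {e \<in> boundary X G C. fst e \<in> K}" for K
  have Bfin: "finite (B K)" for K using bfin unfolding B_def by simp
  have Bne: "B (comp x) \<noteq> {}" if "x \<in> C" for x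
  proof -
    obtain w where w: "w \<in> X - C" using XCinf by (metis ex_in_conv finite.emptyI)
    have "x \<in> X" using that CX by auto
    with w c have "(x, w) \<in> (induced G X)\<^sup>*" unfolding connected_set_def by auto
    moreover have "w \<notin> comp x" using w compC by auto
    ultimately obtain u v where uv: "(u, v) \<in> induced G X" "u \<in> comp x" "v \<notin> comp x"
      using cross_edge self[OF \<open>x \<in> C\<close>] by metis
    then have "v \<notin> C" using closed unfolding induced_def by blast
    with uv compC show ?thesis unfolding B_def boundary_def induced_def by fastforce
  qed
  have Bbd: "B (comp x) = boundary X G (comp x)" for x
  proof -
    have "v \<in> comp x" if "u \<in> comp x" "(u, v) \<in> G" "v \<in> C" for u v
      using closed that by blast
    then show ?thesis unfolding B_def boundary_def using compC by fastforce
  qed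
  have fin: "finite (components G C)"
  proof -
    have "components G C \<subseteq> (\<lambda>e. comp (fst e)) ` boundary X G C"
    proof
      fix K assume "K \<in> components G C"
      then obtain x where x: "x \<in> C" "K = comp x" using comps by auto
      then obtain e where "e \<in> B (comp x)" using Bne by blast
      then have "e \<in> boundary X G C" "fst e \<in> comp x" unfolding B_def by auto
      then show "K \<in> (\<lambda>e. comp (fst e)) ` boundary X G C" using compeq x by auto
    qed
    then show ?thesis using bfin finite_subset by blast
  qed
  let ?F = "{K \<in> components G C. finite K}" and ?I = "{K \<in> components G C. infinite K}"
  have disj: "\<forall>i\<in>components G C. \<forall>j\<in>components G C. i \<noteq> j \<longrightarrow> B i \<inter> B j = {}"
  proof (intro ballI impI)
    fix i j assume ij: "i \<in> components G C" "j \<in> components G C" "i \<noteq> j"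
    show "B i \<inter> B j = {}"
    proof (rule ccontr)
      assume "B i \<inter> B j \<noteq> {}"
      then obtain e where "fst e \<in> i" "fst e \<in> j" unfolding B_def by auto
      moreover obtain x y where "i = comp x" "j = comp y" using ij comps by auto
      ultimately show False using compeq ij(3) by metis
    qed
  qed
  have "(\<Sum>K\<in>components G C. card (B K)) = card (\<Union>(B ` components G C))"
    using card_UN_disjoint[OF fin _ disj] Bfin by simp
  also have "\<dots> \<le> card (boundary X G C)"
    by (rule card_mono[OF bfin]) (auto simp: B_def)
  finally have sumle: "(\<Sum>K\<in>components G C. card (B K)) \<le> card (boundary X G C)" .
  have split: "components G C = ?F \<union> ?I" by auto
  have "(\<Sum>K\<in>components G C. card (B K)) = (\<Sum>K\<in>?F. card (B K)) + (\<Sum>K\<in>?I. card (B K))"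
    by (subst split, rule sum.union_disjoint) (use fin in auto)
  moreover have "card ?F \<le> (\<Sum>K\<in>?F. card (B K))"
  proof -
    have "of_nat (card ?F) * 1 \<le> (\<Sum>K\<in>?F. card (B K))"
    proof (rule sum_bounded_below)
      fix K assume "K \<in> ?F"
      then obtain x where "x \<in> C" "K = comp x" using comps by auto
      then show "1 \<le> card (B K)" using Bne Bfin
        by (metis One_nat_def card_0_eq not_less_eq_eq le0 le_antisym)
    qed
    then show ?thesis by simp
  qed
  moreover have "of_nat (card ?I) * k0 X G \<le> (\<Sum>K\<in>?I. card (B K))"
  proof (rule sum_bounded_below)
    fix K assume K: "K \<in> ?I"
    then obtain x where x: "x \<in> C" "K = comp x" using comps by auto
    have "is_cut X G K"
      unfolding is_cut_def
    proof (intro conjI)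
      show "K \<subseteq> X" using x compC CX by auto
      show "infinite K" using K by simp
      show "infinite (X - K)" using XCinf x compC
        by (meson Diff_mono finite_subset order_refl)
      show "finite (boundary X G K)" using x Bbd Bfin by metis
    qed
    then have "k0 X G \<le> card (boundary X G K)"
      unfolding k0_def by (intro Least_le) blast
    then show "k0 X G \<le> card (B K)" using x Bbd by simp
  qed
  then have "card ?I * k0 X G \<le> (\<Sum>K\<in>?I. card (B K))" by simp
  ultimately have main: "card ?F + card ?I * k0 X G \<le> card (boundary X G C)"
    using sumle by linarith
  have "?I \<noteq> {}"
  proof
    assume "?I = {}"
    then have "\<forall>K\<in>components G C. finite K" by auto
    then have "finite (\<Union>(components G C))" using fin by auto
    moreover have "C \<subseteq> \<Union>(components G C)" using self comps by auto
    ultimately show False using Cinf finite_subset by blast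
  qed
  then have "1 \<le> card ?I" using fin by (simp add: Suc_leI card_gt_0_iff)
  with main fin show ?thesis by simp
qed

lemma boundary_compl:
  assumes g: "is_graph X G" and AX: "A \<subseteq> X"
  shows "boundary X G (X - A) = (\<lambda>(x, y). (y, x)) ` boundary X G A"
proof -
  have symG: "sym G" and GX: "G \<subseteq> X \<times> X" using g unfolding is_graph_def by auto
  show ?thesis
  proof (rule set_eqI)
    fix p :: "'a \<times> 'a"
    obtain u v where p: "p = (u, v)" by (cases p)
    have "(u, v) \<in> G \<longleftrightarrow> (v, u) \<in> G" using symG unfolding sym_def by blast
    moreover have "(u, v) \<in> G \<Longrightarrow> u \<in> X \<and> v \<in> X" using GX by blast
    ultimately show "p \<in> boundary X G (X - A) \<longleftrightarrow> p \<in> (\<lambda>(x, y). (y, x)) ` boundary X G A"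
      unfolding boundary_def p using AX by (auto simp: image_iff)
  qed
qed

lemma thin_connected:
  assumes g: "is_graph X G" and c: "connected_set G X" and t: "thin_cut X G A"
  shows "connected_set G A"
proof -
  have cut: "is_cut X G A" and eq: "card (boundary X G A) = k0 X G"
    using t unfolding thin_cut_def by auto
  let ?F = "{K \<in> components G A. finite K}" and ?I = "{K \<in> components G A. infinite K}"
  have k: "1 \<le> k0 X G" by (rule k0_pos[OF g c cut])
  from main_count[OF g c cut] eq
  have fin: "finite (components G A)" and m: "card ?F + card ?I * k0 X G \<le> k0 X G"
    and b: "1 \<le> card ?I" by auto
  have "1 * k0 X G \<le> card ?I * k0 X G" using b by (rule mult_le_mono1)
  with m have F0: "card ?F = 0" by linarith
  have I1: "card ?I = 1"
  proof (rule ccontr)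
    assume "card ?I \<noteq> 1"
    with b have "2 \<le> card ?I" by linarith
    then have "2 * k0 X G \<le> card ?I * k0 X G" by (rule mult_right_mono) simp
    with m k show False by linarith
  qed
  from F0 fin have "?F = {}" by simp
  then have "components G A = ?I" by auto
  moreover from I1 obtain K where "?I = {K}" by (rule card_1_singletonE)
  ultimately have K: "components G A = {K}" by simp
  show ?thesis
    unfolding connected_set_def
  proof (intro ballI)
    fix x y assume xy: "x \<in> A" "y \<in> A"
    have "(\<lambda>x. {z \<in> A. (x, z) \<in> (induced G A)\<^sup>*}) x \<in> components G A"
      "(\<lambda>x. {z \<in> A. (x, z) \<in> (induced G A)\<^sup>*}) y \<in> components G A"
      unfolding components_def using xy by (blast intro: imageI)+
    then have "{z \<in> A. (x, z) \<in> (induced G A)\<^sup>*} = K" "{z \<in> A. (y, z) \<in> (induced G A)\<^sup>*} = K"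
      using K by simp_all
    then have "y \<in> {z \<in> A. (x, z) \<in> (induced G A)\<^sup>*}" using xy by auto
    then show "(x, y) \<in> (induced G A)\<^sup>*" by simp
  qed
qed

theorem mainTheorem14:
  fixes X :: "'a set" and G :: "('a \<times> 'a) set" and C :: "'a set"
  assumes "is_graph X G"
    and "connected_set G X"
    and "multi_ended X G"
    and "is_cut X G C"
  defines "a \<equiv> card {K \<in> components G C. finite K}"
    and "b \<equiv> card {K \<in> components G C. infinite K}"
  shows "finite {K \<in> components G C. finite K}
      \<and> finite {K \<in> components G C. infinite K}
      \<and> a + b \<le> card (boundary X G C)
      \<and> a < card (boundary X G C)
      \<and> 1 \<le> b
      \<and> real b \<le> (real (card (boundary X G C)) - real a) / real (k0 X G)
      \<and> (\<forall>A. thin_cut X G A \<longrightarrow> connected_set G A)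
      \<and> (\<forall>A. thin_cut X G A \<longrightarrow> neat_cut X G A)"
proof -
  note g = assms(1) and c = assms(2) and cut = assms(4)
  have k: "1 \<le> k0 X G" by (rule k0_pos[OF g c cut])
  from main_count[OF g c cut] have fin: "finite (components G C)"
    and m: "a + b * k0 X G \<le> card (boundary X G C)" and b1: "1 \<le> b"
    unfolding a_def b_def by auto
  have "b \<le> b * k0 X G" using k by simp
  with m have ab: "a + b \<le> card (boundary X G C)" by linarith
  with b1 have alt: "a < card (boundary X G C)" by linarith
  have "real b * real (k0 X G) \<le> real (card (boundary X G C)) - real a"
  proof -
    have "real (a + b * k0 X G) \<le> real (card (boundary X G C))" using m by (simp only: of_nat_le_iff)
    then show ?thesis by simp
  qed
  then have r: "real b \<le> (real (card (boundary X G C)) - real a) / real (k0 X G)"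
    using k by (simp add: field_simps)
  have thin: "\<forall>A. thin_cut X G A \<longrightarrow> connected_set G A"
    using thin_connected[OF g c] by blast
  have neat: "\<forall>A. thin_cut X G A \<longrightarrow> neat_cut X G A"
  proof (intro allI impI)
    fix A assume t: "thin_cut X G A"
    then have cutA: "is_cut X G A" and eq: "card (boundary X G A) = k0 X G"
      unfolding thin_cut_def by auto
    then have AX: "A \<subseteq> X" unfolding is_cut_def by auto
    have bc: "boundary X G (X - A) = (\<lambda>(x, y). (y, x)) ` boundary X G A"
      by (rule boundary_compl[OF g AX])
    have inj: "inj_on (\<lambda>(x::'a, y::'a). (y, x)) (boundary X G A)"
      by (auto simp: inj_on_def)
    have "X - (X - A) = A" using AX by auto
    then have cut2: "is_cut X G (X - A)" using cutA bc unfolding is_cut_def by auto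
    have "card (boundary X G (X - A)) = k0 X G" using bc eq card_image[OF inj] by simp
    with cut2 have "thin_cut X G (X - A)" unfolding thin_cut_def by simp
    then have "connected_set G (X - A)" using thin by blast
    then show "neat_cut X G A" unfolding neat_cut_def using cutA t thin by blast
  qed
  show ?thesis using fin ab alt b1 r thin neat by auto
qed

end
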